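(* If $G$ is a connected graph, then $\mathrm{id}^{\leq 3}(G)\leq \left\lceil \frac{3|E(G)|}{4}\right\rceil$.
   Context: All graphs are finite and simple. For an oriented graph $D$ and a set $X\subseteq V(D)$, the inversion of $X$ reverses the orientation of every arc with both endvertices in $X$. For an integer $p\ge 2$, a $(\leq p)$-inversion is the inversion of a set of at most $p$ vertices. For a graph $G$, $\mathrm{id}^{\leq p}(G)$ (the $(\leq p)$-inversion diameter) is the maximum, over all ordered pairs $(\vec G_1,\vec G_2)$ of orientations of $G$ (on the same labelled vertex set), of the minimum number of $(\leq p)$-inversions whose successive application transforms $\vec G_1$ into $\vec G_2$. *)

theory Defs
  imports Complex_Main
begin

definition simple_graph :: "'a set \<Rightarrow> 'a set set \<Rightarrow> bool" where
  "simple_graph V E \<longleftrightarrow> finite V \<and>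
     (\<forall>e\<in>E. \<exists>u v. e = {u, v} \<and> u \<noteq> v \<and> u \<in> V \<and> v \<in> V)"

definition adj_rel :: "'a set set \<Rightarrow> ('a \<times> 'a) set" where
  "adj_rel E = {(u, v). {u, v} \<in> E}"

definition connected_graph :: "'a set \<Rightarrow> 'a set set \<Rightarrow> bool" where
  "connected_graph V E \<longleftrightarrow> simple_graph V E \<and>
     (\<forall>u\<in>V. \<forall>v\<in>V. (u, v) \<in> (adj_rel E)\<^sup>*)"

definition orientation :: "'a set set \<Rightarrow> ('a \<times> 'a) set \<Rightarrow> bool" where
  "orientation E D \<longleftrightarrow> (\<forall>(u, v)\<in>D. {u, v} \<in> E) \<and>
     (\<forall>u v. {u, v} \<in> E \<and> u \<noteq> v \<longrightarrow> ((u, v) \<in> D \<longleftrightarrow> (v, u) \<notin> D))"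

definition invert :: "('a \<times> 'a) set \<Rightarrow> 'a set \<Rightarrow> ('a \<times> 'a) set" where
  "invert D X = {(u, v). (u, v) \<in> D \<and> \<not> (u \<in> X \<and> v \<in> X)} \<union>
                {(v, u) | u v. (u, v) \<in> D \<and> u \<in> X \<and> v \<in> X}"

definition transformable :: "nat \<Rightarrow> 'a set \<Rightarrow> ('a \<times> 'a) set \<Rightarrow> ('a \<times> 'a) set \<Rightarrow> nat \<Rightarrow> bool" where
  "transformable p V D1 D2 k \<longleftrightarrow> (\<exists>Xs. length Xs = k \<and>
     (\<forall>X\<in>set Xs. X \<subseteq> V \<and> card X \<le> p) \<and> foldl invert D1 Xs = D2)"

definition inv_dist :: "nat \<Rightarrow> 'a set \<Rightarrow> ('a \<times> 'a) set \<Rightarrow> ('a \<times> 'a) set \<Rightarrow> nat" where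
  "inv_dist p V D1 D2 = (LEAST k. transformable p V D1 D2 k)"

definition inv_diam :: "nat \<Rightarrow> 'a set \<Rightarrow> 'a set set \<Rightarrow> nat" where
  "inv_diam p V E = Max {inv_dist p V D1 D2 | D1 D2. orientation E D1 \<and> orientation E D2}"

end

theory Submission
  imports Defs
begin

definition symd :: "'b set \<Rightarrow> 'b set \<Rightarrow> 'b set" where
  "symd A B = (A - B) \<union> (B - A)"

fun eff :: "'a set set \<Rightarrow> 'a set list \<Rightarrow> 'a set set" where
  "eff E [] = {}"
| "eff E (X # Xs) = symd {e\<in>E. e \<subseteq> X} (eff E Xs)"

definition flipD :: "('a \<times> 'a) set \<Rightarrow> 'a set set \<Rightarrow> ('a \<times> 'a) set" where
  "flipD D F = {(u, v). ((u, v) \<in> D \<and> {u, v} \<notin> F) \<or> ((v, u) \<in> D \<and> {u, v} \<in> F)}"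

definition arcs_ok :: "'a set set \<Rightarrow> ('a \<times> 'a) set \<Rightarrow> bool" where
  "arcs_ok E D \<longleftrightarrow> (\<forall>(u, v)\<in>D. {u, v} \<in> E)"

lemma invert_flip:
  assumes "arcs_ok E D"
  shows "invert D X = flipD D {e\<in>E. e \<subseteq> X}"
  using assms unfolding invert_def flipD_def arcs_ok_def
  by (auto simp: insert_commute)

lemma flip_flip: "flipD (flipD D F) G = flipD D (symd F G)"
  unfolding flipD_def symd_def by (auto simp: insert_commute)

lemma flip_ok: "arcs_ok E D \<Longrightarrow> arcs_ok E (flipD D F)"
  unfolding flipD_def arcs_ok_def by (auto simp: insert_commute)

lemma foldl_invert:
  assumes "arcs_ok E D"
  shows "foldl invert D Xs = flipD D (eff E Xs)"
  using assms
proof (induction Xs arbitrary: D)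
  case Nil
  then show ?case by (simp add: flipD_def)
next
  case (Cons X Xs)
  have "foldl invert D (X # Xs) = foldl invert (flipD D {e\<in>E. e \<subseteq> X}) Xs"
    using invert_flip[OF Cons.prems] by simp
  also have "\<dots> = flipD (flipD D {e\<in>E. e \<subseteq> X}) (eff E Xs)"
    using Cons.IH flip_ok[OF Cons.prems] by blast
  finally show ?case by (simp add: flip_flip)
qed

lemma orient_ok: "orientation E D \<Longrightarrow> arcs_ok E D"
  unfolding orientation_def arcs_ok_def by blast

lemma orient_diff:
  assumes "simple_graph V E" "orientation E D1" "orientation E D2"
  shows "flipD D1 {{u, v} | u v. (u, v) \<in> D1 \<and> (u, v) \<notin> D2} = D2"
    and "{{u, v} | u v. (u, v) \<in> D1 \<and> (u, v) \<notin> D2} \<subseteq> E"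
proof -
  let ?F = "{{u, v} | u v. (u, v) \<in> D1 \<and> (u, v) \<notin> D2}"
  have edge: "u \<noteq> v" if "{u, v} \<in> E" for u v
    using assms(1) that unfolding simple_graph_def
    by (metis doubleton_eq_iff insert_absorb2)
  show "?F \<subseteq> E" using assms(2) unfolding orientation_def by auto
  show "flipD D1 ?F = D2"
  proof (rule set_eqI, clarify)
    fix u v
    show "((u, v) \<in> flipD D1 ?F) = ((u, v) \<in> D2)"
    proof (cases "{u, v} \<in> E")
      case False
      have c: "{v, u} = {u, v}" by (rule insert_commute)
      have o1: "\<forall>(x, y)\<in>D1. {x, y} \<in> E" "\<forall>(x, y)\<in>D2. {x, y} \<in> E"
        using assms(2,3) unfolding orientation_def by blast+
      have a: "(u, v) \<notin> D1" "(v, u) \<notin> D1" "(u, v) \<notin> D2"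
        using False o1 c by fastforce+
      show ?thesis unfolding flipD_def using a by simp
    next
      case True
      then have uv: "u \<noteq> v" using edge by blast
      have o1: "(u, v) \<in> D1 \<longleftrightarrow> (v, u) \<notin> D1" using assms(2) True uv unfolding orientation_def by blast
      have o2: "(u, v) \<in> D2 \<longleftrightarrow> (v, u) \<notin> D2" using assms(3) True uv unfolding orientation_def by blast
      have inF: "{u, v} \<in> ?F \<longleftrightarrow> ((u, v) \<in> D1 \<and> (u, v) \<notin> D2) \<or> ((v, u) \<in> D1 \<and> (v, u) \<notin> D2)"
        using uv by (auto simp: doubleton_eq_iff)
      show ?thesis unfolding flipD_def using o1 o2 inF by auto
    qed
  qed
qed


definition covr :: "'a set set \<Rightarrow> 'a set set \<Rightarrow> 'a set set" where
  "covr E Os = {e\<in>E. \<exists>Q\<in>Os. e \<subseteq> Q}"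

definition okops :: "'a set \<Rightarrow> 'a set list \<Rightarrow> bool" where
  "okops V Xs \<longleftrightarrow> (\<forall>X\<in>set Xs. X \<subseteq> V \<and> card X \<le> 3)"

lemma edge_sub:
  assumes "simple_graph V E" "e \<in> E" "e' \<in> E" "e' \<subseteq> e"
  shows "e' = e"
proof -
  obtain a b where "e = {a, b}" "a \<noteq> b" using assms(1,2) unfolding simple_graph_def by blast
  moreover obtain c d where "e' = {c, d}" "c \<noteq> d" using assms(1,3) unfolding simple_graph_def by blast
  ultimately show ?thesis using assms(4) by auto
qed

lemma eff_edges:
  assumes "simple_graph V E" "set xs \<subseteq> E" "distinct xs"
  shows "eff E xs = set xs"
  using assms(2,3)
proof (induction xs)
  case Nil
  then show ?case by simp
next
  case (Cons x xs)
  have "{e\<in>E. e \<subseteq> x} = {x}" using edge_sub[OF assms(1)] Cons.prems by auto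
  then show ?case using Cons by (auto simp: symd_def)
qed

lemma base_real:
  assumes "simple_graph V E" "F \<subseteq> E"
  shows "\<exists>Xs. okops V Xs \<and> eff E Xs = F \<and> length Xs = card F"
proof -
  have finE: "finite E"
  proof -
    have "E \<subseteq> Pow V" using assms(1) unfolding simple_graph_def by auto
    then show ?thesis using assms(1) unfolding simple_graph_def by (meson finite_Pow_iff finite_subset)
  qed
  then have "finite F" using assms(2) finite_subset by blast
  then obtain xs where xs: "set xs = F" "distinct xs" using finite_distinct_list by blast
  have "okops V xs"
    unfolding okops_def
  proof
    fix X assume "X \<in> set xs"
    then have "X \<in> E" using xs assms(2) by auto
    then obtain a b where "X = {a, b}" "a \<in> V" "b \<in> V" using assms(1) unfolding simple_graph_def by blast
    then show "X \<subseteq> V \<and> card X \<le> 3" by (simp add: card_insert_if)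
  qed
  moreover have "eff E xs = F" using eff_edges[OF assms(1)] xs assms(2) by simp
  moreover have "length xs = card F" using xs distinct_card by fastforce
  ultimately show ?thesis by blast
qed

lemma card_split:
  assumes "finite E" "F \<subseteq> E" "T \<subseteq> E" "C \<subseteq> E"
  shows "card (F - C) + card (symd F T - C) = card (T - C) + 2 * card (F - (T \<union> C))"
proof -
  have fin: "finite X" if "X \<subseteq> E" for X using assms(1) finite_subset that by blast
  have A: "F - C = (F \<inter> (T - C)) \<union> (F - (T \<union> C))" by auto
  have B: "symd F T - C = ((T - C) - F) \<union> (F - (T \<union> C))" by (auto simp: symd_def)
  have cA: "card (F - C) = card (F \<inter> (T - C)) + card (F - (T \<union> C))"
    unfolding A by (rule card_Un_disjoint) (use fin assms in auto)
  have cB: "card (symd F T - C) = card ((T - C) - F) + card (F - (T \<union> C))"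
    unfolding B by (rule card_Un_disjoint) (use fin assms in auto)
  have cT: "card (T - C) = card (F \<inter> (T - C)) + card ((T - C) - F)"
  proof -
    have "T - C = (F \<inter> (T - C)) \<union> ((T - C) - F)" by auto
    moreover have "card ((F \<inter> (T - C)) \<union> ((T - C) - F)) = card (F \<inter> (T - C)) + card ((T - C) - F)"
      by (rule card_Un_disjoint) (use fin assms in auto)
    ultimately show ?thesis by simp
  qed
  show ?thesis using cA cB cT by simp
qed

lemma averaging:
  assumes sg: "simple_graph V E" and fin: "finite Os" and ops: "\<forall>Q\<in>Os. Q \<subseteq> V \<and> card Q \<le> 3"
  shows "\<forall>F. F \<subseteq> E \<longrightarrow> (\<exists>Xs. okops V Xs \<and> eff E Xs = F \<and>
           2 * length Xs \<le> card Os + card (covr E Os) + 2 * card (F - covr E Os))"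
  using fin ops
proof (induction Os rule: finite_induct)
  case empty
  show ?case
  proof (intro allI impI)
    fix F assume "F \<subseteq> E"
    then obtain Xs where "okops V Xs" "eff E Xs = F" "length Xs = card F" using base_real[OF sg] by blast
    then show "\<exists>Xs. okops V Xs \<and> eff E Xs = F \<and>
           2 * length Xs \<le> card {} + card (covr E {}) + 2 * card (F - covr E {})"
      by (auto simp: covr_def)
  qed
next
  case (insert Q Os)
  have finE: "finite E"
  proof -
    have "E \<subseteq> Pow V" using sg unfolding simple_graph_def by auto
    then show ?thesis using sg unfolding simple_graph_def by (meson finite_Pow_iff finite_subset)
  qed
  let ?T = "{e\<in>E. e \<subseteq> Q}"
  let ?C = "covr E Os"
  have IH: "\<forall>F. F \<subseteq> E \<longrightarrow> (\<exists>Xs. okops V Xs \<and> eff E Xs = F \<and>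
           2 * length Xs \<le> card Os + card ?C + 2 * card (F - ?C))"
    using insert by blast
  have Ook: "Q \<subseteq> V \<and> card Q \<le> 3" using insert.prems by blast
  have cov: "covr E (insert Q Os) = ?T \<union> ?C" unfolding covr_def by auto
  have CE: "?C \<subseteq> E" unfolding covr_def by auto
  have ccov: "card (?T \<union> ?C) = card ?C + card (?T - ?C)"
  proof -
    have "?T \<union> ?C = ?C \<union> (?T - ?C)" by auto
    moreover have "card (?C \<union> (?T - ?C)) = card ?C + card (?T - ?C)"
      by (rule card_Un_disjoint) (use finE CE finite_subset in auto)
    ultimately show ?thesis by simp
  qed
  show ?case
  proof (intro allI impI)
    fix F assume FE: "F \<subseteq> E"
    obtain Xs1 where X1: "okops V Xs1" "eff E Xs1 = F"
      "2 * length Xs1 \<le> card Os + card ?C + 2 * card (F - ?C)" using IH FE by blast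
    have F2E: "symd F ?T \<subseteq> E" using FE by (auto simp: symd_def)
    obtain Xs2 where X2: "okops V Xs2" "eff E Xs2 = symd F ?T"
      "2 * length Xs2 \<le> card Os + card ?C + 2 * card (symd F ?T - ?C)" using IH F2E by blast
    have split: "card (F - ?C) + card (symd F ?T - ?C) = card (?T - ?C) + 2 * card (F - (?T \<union> ?C))"
      by (rule card_split[OF finE FE _ CE]) auto
    have X2': "okops V (Q # Xs2)" using X2(1) Ook unfolding okops_def by auto
    have e2: "eff E (Q # Xs2) = F" using X2(2) FE by (auto simp: symd_def)
    have cardI: "card (insert Q Os) = card Os + 1" using insert.hyps by simp
    have sum: "length Xs1 + length (Q # Xs2) \<le> card (insert Q Os) + card (covr E (insert Q Os)) + 2 * card (F - covr E (insert Q Os))"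
      using X1(3) X2(3) split unfolding cov ccov cardI by simp
    show "\<exists>Xs. okops V Xs \<and> eff E Xs = F \<and>
           2 * length Xs \<le> card (insert Q Os) + card (covr E (insert Q Os)) + 2 * card (F - covr E (insert Q Os))"
    proof (cases "length Xs1 \<le> length (Q # Xs2)")
      case True
      then show ?thesis using X1 sum by (intro exI[of _ Xs1]) auto
    next
      case False
      then show ?thesis using X2' e2 sum by (intro exI[of _ "Q # Xs2"]) auto
    qed
  qed
qed


lemma finE: "simple_graph V E \<Longrightarrow> finite E"
proof -
  assume sg: "simple_graph V E"
  have "E \<subseteq> Pow V" using sg unfolding simple_graph_def by auto
  then show ?thesis using sg unfolding simple_graph_def by (meson finite_Pow_iff finite_subset)
qed

lemma odd_symd1:
  assumes "finite S"
  shows "odd (card (symd S {x})) \<longleftrightarrow> \<not> odd (card S)"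
proof (cases "x \<in> S")
  case True
  then have "symd S {x} = S - {x}" by (auto simp: symd_def)
  moreover have "card S \<ge> 1" using True assms by (metis One_nat_def Suc_leI card_gt_0_iff empty_iff)
  ultimately show ?thesis using True assms by auto
next
  case False
  then have "symd S {x} = insert x S" by (auto simp: symd_def)
  then show ?thesis using False assms by simp
qed

lemma walk:
  assumes "(a, b) \<in> (adj_rel E)\<^sup>*" "simple_graph V E"
  shows "\<exists>W \<subseteq> E. \<forall>v. odd (card {e\<in>W. v \<in> e}) \<longleftrightarrow> ((v = a) \<noteq> (v = b))"
  using assms(1)
proof (induction rule: rtrancl_induct)
  case base
  show ?case by (intro exI[of _ "{}"]) simp
next
  case (step b c)
  obtain W where W: "W \<subseteq> E" "\<forall>v. odd (card {e\<in>W. v \<in> e}) \<longleftrightarrow> ((v = a) \<noteq> (v = b))"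
    using step.IH by blast
  have bc: "{b, c} \<in> E" using step.hyps(2) unfolding adj_rel_def by simp
  have bnc: "b \<noteq> c"
    using assms(2) bc unfolding simple_graph_def by (metis doubleton_eq_iff insert_absorb2)
  have finW: "finite W" using W(1) finE[OF assms(2)] finite_subset by blast
  let ?W = "symd W {{b, c}}"
  have "?W \<subseteq> E" using W(1) bc by (auto simp: symd_def)
  moreover have "odd (card {e\<in>?W. v \<in> e}) \<longleftrightarrow> ((v = a) \<noteq> (v = c))" for v
  proof (cases "v = b \<or> v = c")
    case True
    then have "{e\<in>?W. v \<in> e} = symd {e\<in>W. v \<in> e} {{b, c}}" by (auto simp: symd_def)
    then have "odd (card {e\<in>?W. v \<in> e}) \<longleftrightarrow> \<not> odd (card {e\<in>W. v \<in> e})"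
      using odd_symd1[of "{e\<in>W. v \<in> e}" "{b, c}"] finW by simp
    then show ?thesis using W(2) True bnc by auto
  next
    case False
    then have "{e\<in>?W. v \<in> e} = {e\<in>W. v \<in> e}" by (auto simp: symd_def)
    then show ?thesis using W(2) False by auto
  qed
  ultimately show ?case by blast
qed

definition indeg :: "'a set set \<Rightarrow> ('a set \<Rightarrow> 'a) \<Rightarrow> 'a \<Rightarrow> nat" where
  "indeg E h v = card {e\<in>E. h e = v}"

lemma reorient_parity:
  assumes sg: "simple_graph V E" and h: "\<forall>e\<in>E. h e \<in> e" and g: "\<forall>e\<in>E. g e \<in> e \<and> g e \<noteq> h e"
    and W: "W \<subseteq> E"
  shows "odd (indeg E (\<lambda>e. if e \<in> W then g e else h e) v) \<longleftrightarrow>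
         (odd (indeg E h v) \<noteq> odd (card {e\<in>W. v \<in> e}))"
proof -
  have fE: "finite E" using finE[OF sg] .
  have fin: "finite X" if "X \<subseteq> E" for X using fE that finite_subset by blast
  let ?h' = "\<lambda>e. if e \<in> W then g e else h e"
  have e1: "{e\<in>E. ?h' e = v} = {e\<in>E - W. h e = v} \<union> {e\<in>W. g e = v}" using W by auto
  have c1: "card {e\<in>E. ?h' e = v} = card {e\<in>E - W. h e = v} + card {e\<in>W. g e = v}"
    unfolding e1 by (rule card_Un_disjoint) (use fin W in auto)
  have e2: "{e\<in>E. h e = v} = {e\<in>E - W. h e = v} \<union> {e\<in>W. h e = v}" using W by auto
  have c2: "card {e\<in>E. h e = v} = card {e\<in>E - W. h e = v} + card {e\<in>W. h e = v}"
    unfolding e2 by (rule card_Un_disjoint) (use fin W in auto)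
  have pair: "e = {h e, g e}" if "e \<in> W" for e
  proof -
    have eE: "e \<in> E" using that W by auto
    obtain x y where "e = {x, y}" "x \<noteq> y" using sg eE unfolding simple_graph_def by blast
    moreover have "h e \<in> e" "g e \<in> e" "g e \<noteq> h e" using h g eE by auto
    ultimately show ?thesis by auto
  qed
  have e3: "{e\<in>W. v \<in> e} = {e\<in>W. h e = v} \<union> {e\<in>W. g e = v}"
  proof (rule set_eqI)
    fix e
    show "e \<in> {e\<in>W. v \<in> e} \<longleftrightarrow> e \<in> {e\<in>W. h e = v} \<union> {e\<in>W. g e = v}"
    proof (cases "e \<in> W")
      case True
      then have "e = {h e, g e}" by (rule pair)
      then have "v \<in> e \<longleftrightarrow> h e = v \<or> g e = v" by (metis insert_iff singletonD)
      then show ?thesis using True by auto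
    next
      case False
      then show ?thesis by auto
    qed
  qed
  have disj: "{e\<in>W. h e = v} \<inter> {e\<in>W. g e = v} = {}" using g W by auto
  have c3: "card {e\<in>W. v \<in> e} = card {e\<in>W. h e = v} + card {e\<in>W. g e = v}"
    unfolding e3 by (rule card_Un_disjoint) (use fin W disj in auto)
  have "indeg E ?h' v + 2 * card {e\<in>W. h e = v} = indeg E h v + card {e\<in>W. v \<in> e}"
    unfolding indeg_def using c1 c2 c3 by simp
  moreover have key: "odd a \<longleftrightarrow> (odd b \<noteq> odd c)" if "a + 2 * k = b + c" for a b c k :: nat
  proof -
    have "even (a + 2 * k) = even (b + c)" using that by simp
    then show ?thesis by simp
  qed
  ultimately show ?thesis by blast
qed

lemma good_orient:
  assumes cg: "connected_graph V E"
  shows "\<exists>h. (\<forall>e\<in>E. h e \<in> e) \<and> card {v\<in>V. odd (indeg E h v)} \<le> 1"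
proof -
  have sg: "simple_graph V E" using cg unfolding connected_graph_def by blast
  have fV: "finite V" using sg unfolding simple_graph_def by blast
  have main: "\<forall>h. (\<forall>e\<in>E. h e \<in> e) \<and> card {v\<in>V. odd (indeg E h v)} = n \<longrightarrow>
      (\<exists>h. (\<forall>e\<in>E. h e \<in> e) \<and> card {v\<in>V. odd (indeg E h v)} \<le> 1)" for n
  proof (induction n rule: less_induct)
    case (less n)
    show ?case
    proof (intro allI impI)
      fix h assume hh: "(\<forall>e\<in>E. h e \<in> e) \<and> card {v\<in>V. odd (indeg E h v)} = n"
      show "\<exists>h. (\<forall>e\<in>E. h e \<in> e) \<and> card {v\<in>V. odd (indeg E h v)} \<le> 1"
      proof (cases "n \<le> 1")
        case True
        then show ?thesis using hh by blast
      next
        case False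
        let ?S = "{v\<in>V. odd (indeg E h v)}"
        have nle: "\<not> card ?S \<le> Suc 0" using False hh by simp
        have fS: "finite ?S" using fV by simp
        have "\<exists>a\<in>?S. \<exists>b\<in>?S. a \<noteq> b"
          using nle card_le_Suc0_iff_eq[OF fS] by blast
        then obtain a b where ab: "a \<in> ?S" "b \<in> ?S" "a \<noteq> b" by blast
        have "(a, b) \<in> (adj_rel E)\<^sup>*" using cg ab unfolding connected_graph_def by blast
        then have "\<exists>W \<subseteq> E. \<forall>v. odd (card {e\<in>W. v \<in> e}) \<longleftrightarrow> ((v = a) \<noteq> (v = b))"
          by (rule walk[OF _ sg])
        then obtain W where W: "W \<subseteq> E" "\<forall>v. odd (card {e\<in>W. v \<in> e}) \<longleftrightarrow> ((v = a) \<noteq> (v = b))"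
          by blast
        define g where "g = (\<lambda>e. SOME w. w \<in> e \<and> w \<noteq> h e)"
        have g: "\<forall>e\<in>E. g e \<in> e \<and> g e \<noteq> h e"
        proof
          fix e assume eE: "e \<in> E"
          obtain x y where xy: "e = {x, y}" "x \<noteq> y" using sg eE unfolding simple_graph_def by blast
          have "\<exists>w. w \<in> e \<and> w \<noteq> h e"
          proof (cases "h e = x")
            case True
            then show ?thesis using xy by (intro exI[of _ y]) simp
          next
            case False
            then show ?thesis using xy by (intro exI[of _ x]) simp
          qed
          then show "g e \<in> e \<and> g e \<noteq> h e" unfolding g_def by (rule someI_ex)
        qed
        define h' where "h' = (\<lambda>e. if e \<in> W then g e else h e)"
        have h'e: "\<forall>e\<in>E. h' e \<in> e" using g hh unfolding h'_def by auto
        have par: "odd (indeg E h' v) \<longleftrightarrow> (odd (indeg E h v) \<noteq> ((v = a) \<noteq> (v = b)))" for v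
          using reorient_parity[OF sg _ g W(1), of v] hh W(2) unfolding h'_def by blast
        have S': "{v\<in>V. odd (indeg E h' v)} = ?S - {a, b}"
          using par ab by auto
        have "card (?S - {a, b}) = card ?S - 2"
          using ab fV by (simp add: card_Diff_subset)
        then have "card {v\<in>V. odd (indeg E h' v)} < n" using S' hh False by simp
        then show ?thesis using less.IH h'e by blast
      qed
    qed
  qed
  define h0 where "h0 = (\<lambda>e::'a set. SOME w. w \<in> e)"
  have "\<forall>e\<in>E. h0 e \<in> e"
  proof
    fix e assume eE: "e \<in> E"
    obtain x y where "e = {x, y}" using sg eE unfolding simple_graph_def by blast
    then have "\<exists>w. w \<in> e" by auto
    then show "h0 e \<in> e" unfolding h0_def by (rule someI_ex)
  qed
  then show ?thesis using main by blast
qed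


lemma edge_form:
  assumes "simple_graph V E" "e \<in> E"
  shows "\<exists>a b. e = {a, b} \<and> a \<noteq> b \<and> a \<in> V \<and> b \<in> V"
  using assms unfolding simple_graph_def by simp

lemma pair_star:
  assumes "finite A" "v \<in> V" "\<forall>e\<in>A. \<exists>x\<in>V. e = {v, x}"
  shows "\<exists>Os U. finite Os \<and> (\<forall>Q\<in>Os. Q \<subseteq> V \<and> card Q \<le> 3) \<and> U \<subseteq> A \<and> card U \<le> 1 \<and>
           (even (card A) \<longrightarrow> U = {}) \<and> (\<forall>e\<in>A - U. \<exists>Q\<in>Os. e \<subseteq> Q) \<and> 2 * card Os + card U \<le> card A"
  using assms
proof (induction "card A" arbitrary: A rule: less_induct)
  case less
  show ?case
  proof (cases "card A \<le> 1")
    case True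
    have "card A = 0 \<or> card A = 1" using True by linarith
    then have "even (card A) \<longrightarrow> card A = 0" by auto
    then have "even (card A) \<longrightarrow> A = {}" using less.prems(1) by simp
    then show ?thesis using True by (intro exI[of _ "{}"] exI[of _ A]) auto
  next
    case False
    then obtain e1 where e1: "e1 \<in> A" by fastforce
    have "card (A - {e1}) \<ge> 1" using False e1 less.prems(1) by simp
    then have "A - {e1} \<noteq> {}" by (metis card.empty not_one_le_zero)
    then obtain e2 where e2: "e2 \<in> A - {e1}" by blast
    let ?A = "A - {e1, e2}"
    have cA: "card ?A = card A - 2" using e1 e2 less.prems(1) by (auto simp: card_Diff_subset card_insert_if)
    have lt: "card ?A < card A" using cA False by simp
    have fA: "finite ?A" using less.prems(1) by simp
    have st: "\<forall>e\<in>?A. \<exists>x\<in>V. e = {v, x}" using less.prems(3) by blast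
    note ex = less.hyps[OF lt fA less.prems(2) st]
    obtain Os U where IH: "finite Os" "\<forall>Q\<in>Os. Q \<subseteq> V \<and> card Q \<le> 3" "U \<subseteq> ?A" "card U \<le> 1"
        "even (card ?A) \<longrightarrow> U = {}" "\<forall>e\<in>?A - U. \<exists>Q\<in>Os. e \<subseteq> Q" "2 * card Os + card U \<le> card ?A"
      using ex by blast
    obtain x where x: "x \<in> V" "e1 = {v, x}" using less.prems(3) e1 by blast
    obtain y where y: "y \<in> V" "e2 = {v, y}" using less.prems(3) e2 by blast
    let ?Q = "{v, x, y}"
    have Qok: "?Q \<subseteq> V \<and> card ?Q \<le> 3" using x y less.prems(2) by (simp add: card_insert_if)
    have cO: "card (insert ?Q Os) \<le> card Os + 1" using IH(1) by (simp add: card_insert_if)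
    have par: "even (card A) \<longleftrightarrow> even (card ?A)" using cA False by auto
    have g1: "finite (insert ?Q Os)" using IH(1) by simp
    have g2: "\<forall>Q\<in>insert ?Q Os. Q \<subseteq> V \<and> card Q \<le> 3" using IH(2) Qok by blast
    have g3: "U \<subseteq> A" using IH(3) by blast
    have g4: "card U \<le> 1" by (rule IH(4))
    have g5: "even (card A) \<longrightarrow> U = {}" using IH(5) par by blast
    have g6: "\<forall>e\<in>A - U. \<exists>Q\<in>insert ?Q Os. e \<subseteq> Q"
    proof
      fix e assume "e \<in> A - U"
      then have "e = e1 \<or> e = e2 \<or> e \<in> ?A - U" by blast
      moreover have "e1 \<subseteq> ?Q" "e2 \<subseteq> ?Q" using x(2) y(2) by auto
      moreover have "e \<in> ?A - U \<Longrightarrow> \<exists>Q\<in>Os. e \<subseteq> Q" using IH(6) by (rule bspec)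
      ultimately show "\<exists>Q\<in>insert ?Q Os. e \<subseteq> Q" by auto
    qed
    have g7: "2 * card (insert ?Q Os) + card U \<le> card A" using IH(7) cO cA False by linarith
    show ?thesis by (intro exI[of _ "insert ?Q Os"] exI[of _ U] conjI g1 g2 g3 g4 g5 g6 g7)
  qed
qed

lemma cover:
  assumes cg: "connected_graph V E"
  shows "\<exists>Os U. finite Os \<and> (\<forall>Q\<in>Os. Q \<subseteq> V \<and> card Q \<le> 3) \<and> U \<subseteq> E \<and> card U \<le> 1 \<and>
           E - U \<subseteq> covr E Os \<and> 2 * card Os + card U \<le> card E"
proof -
  have sg: "simple_graph V E" using cg unfolding connected_graph_def by blast
  have fV: "finite V" using sg unfolding simple_graph_def by blast
  have fE: "finite E" using finE[OF sg] .
  obtain h where h: "\<forall>e\<in>E. h e \<in> e" "card {v\<in>V. odd (indeg E h v)} \<le> 1"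
    using good_orient[OF cg] by blast
  define A where "A = (\<lambda>v. {e\<in>E. h e = v})"
  have Afin: "finite (A v)" for v using fE unfolding A_def by simp
  have eV: "e \<subseteq> V" if eE: "e \<in> E" for e
  proof -
    obtain a b where "e = {a, b}" "a \<in> V" "b \<in> V" using edge_form[OF sg eE] by (elim exE conjE) simp
    then show ?thesis by simp
  qed
  have Astar: "\<forall>e\<in>A v. \<exists>x\<in>V. e = {v, x}" if "v \<in> V" for v
  proof
    fix e assume "e \<in> A v"
    then have eE: "e \<in> E" and hv: "h e = v" unfolding A_def by auto
    obtain a b where ab: "e = {a, b}" "a \<in> V" "b \<in> V" using edge_form[OF sg eE] by (elim exE conjE) simp
    have "v = a \<or> v = b" using h(1) eE hv ab by auto
    then show "\<exists>x\<in>V. e = {v, x}" using ab by (metis insert_commute)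
  qed
  let ?P = "\<lambda>v OU. finite (fst OU) \<and> (\<forall>Q\<in>fst OU. Q \<subseteq> V \<and> card Q \<le> 3) \<and> snd OU \<subseteq> A v \<and> card (snd OU) \<le> 1 \<and>
           (even (card (A v)) \<longrightarrow> snd OU = {}) \<and> (\<forall>e\<in>A v - snd OU. \<exists>Q\<in>fst OU. e \<subseteq> Q) \<and>
           2 * card (fst OU) + card (snd OU) \<le> card (A v)"
  have "\<forall>v\<in>V. \<exists>OU. ?P v OU"
  proof
    fix v assume v: "v \<in> V"
    obtain Os U where "finite Os \<and> (\<forall>Q\<in>Os. Q \<subseteq> V \<and> card Q \<le> 3) \<and> U \<subseteq> A v \<and> card U \<le> 1 \<and>
           (even (card (A v)) \<longrightarrow> U = {}) \<and> (\<forall>e\<in>A v - U. \<exists>Q\<in>Os. e \<subseteq> Q) \<and> 2 * card Os + card U \<le> card (A v)"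
      using pair_star[OF Afin v Astar[OF v]] by blast
    then show "\<exists>OU. ?P v OU" by (intro exI[of _ "(Os, U)"]) simp
  qed
  then obtain f where f: "\<forall>v\<in>V. ?P v (f v)" by (rule bchoice[elim_format]) blast
  have fv: "?P v (f v)" if "v \<in> V" for v using f that by (rule bspec)
  have f1: "finite (fst (f v))" if "v \<in> V" for v using fv[OF that] by (elim conjE)
  have f2: "\<forall>Q\<in>fst (f v). Q \<subseteq> V \<and> card Q \<le> 3" if "v \<in> V" for v using fv[OF that] by (elim conjE)
  have f3: "snd (f v) \<subseteq> A v" if "v \<in> V" for v using fv[OF that] by (elim conjE)
  have f5: "even (card (A v)) \<longrightarrow> snd (f v) = {}" if "v \<in> V" for v using fv[OF that] by (elim conjE)
  have f4: "card (snd (f v)) \<le> 1" if "v \<in> V" for v using fv[OF that] by (elim conjE)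
  have f6: "\<forall>e\<in>A v - snd (f v). \<exists>Q\<in>fst (f v). e \<subseteq> Q" if "v \<in> V" for v using fv[OF that] by (elim conjE)
  have f7: "2 * card (fst (f v)) + card (snd (f v)) \<le> card (A v)" if "v \<in> V" for v using fv[OF that] by (elim conjE)
  define Os where "Os = (\<Union>v\<in>V. fst (f v))"
  define U where "U = (\<Union>v\<in>V. snd (f v))"
  have fOs: "finite Os" unfolding Os_def using fV f1 by blast
  have Osok: "\<forall>Q\<in>Os. Q \<subseteq> V \<and> card Q \<le> 3" unfolding Os_def using f2 by blast
  have UE: "U \<subseteq> E" unfolding U_def using f3 unfolding A_def by blast
  have cOs: "card Os \<le> (\<Sum>v\<in>V. card (fst (f v)))" unfolding Os_def by (rule card_UN_le[OF fV])
  have cU: "card U \<le> (\<Sum>v\<in>V. card (snd (f v)))" unfolding U_def by (rule card_UN_le[OF fV])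
  have cU1: "(\<Sum>v\<in>V. card (snd (f v))) \<le> (\<Sum>v\<in>V. if odd (indeg E h v) then 1 else 0)"
  proof (rule sum_mono)
    fix v assume v: "v \<in> V"
    have "indeg E h v = card (A v)" unfolding indeg_def A_def by simp
    then show "card (snd (f v)) \<le> (if odd (indeg E h v) then 1 else 0)" using f4[OF v] f5[OF v] by auto
  qed
  have cnt: "(\<Sum>v\<in>V. if odd (indeg E h v) then 1 else 0) = card {v\<in>V. odd (indeg E h v)}"
    using sum.inter_filter[OF fV, of "\<lambda>_. (1::nat)" "\<lambda>v. odd (indeg E h v)"] by simp
  have U1: "card U \<le> 1" using cU cU1 cnt h(2) by linarith
  have cov: "E - U \<subseteq> covr E Os"
  proof
    fix e assume e: "e \<in> E - U"
    let ?v = "h e"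
    have vV: "?v \<in> V" using h(1) e eV by blast
    have "e \<in> A ?v - snd (f ?v)" using e vV unfolding A_def U_def by blast
    then obtain Q where "Q \<in> fst (f ?v)" "e \<subseteq> Q" using f6[OF vV] by blast
    then show "e \<in> covr E Os" unfolding covr_def Os_def using e vV by blast
  qed
  have Eun: "E = (\<Union>v\<in>V. A v)" unfolding A_def using h(1) eV by blast
  have cE: "card E = (\<Sum>v\<in>V. card (A v))"
    unfolding Eun by (rule card_UN_disjoint[OF fV]) (auto simp: Afin A_def fE)
  have "(\<Sum>v\<in>V. 2 * card (fst (f v)) + card (snd (f v))) \<le> (\<Sum>v\<in>V. card (A v))"
    by (rule sum_mono) (rule f7)
  then have "2 * (\<Sum>v\<in>V. card (fst (f v))) + (\<Sum>v\<in>V. card (snd (f v))) \<le> card E"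
    unfolding cE by (simp add: sum.distrib sum_distrib_left)
  then have "2 * card Os + card U \<le> card E" using cOs cU by linarith
  then show ?thesis using fOs Osok UE U1 cov by blast
qed

lemma ceil_bound:
  fixes n m :: nat
  assumes "4 * n \<le> 3 * m + 1"
  shows "int n \<le> ceiling (3 * real m / 4)"
proof -
  have "real (4 * n) \<le> real (3 * m + 1)" using assms by linarith
  then have "real n - 1 < 3 * real m / 4" by simp
  then show ?thesis by (simp add: le_ceiling_iff)
qed

theorem mainTheorem4:
  fixes V :: "'a set" and E :: "'a set set"
  assumes "connected_graph V E"
  shows "int (inv_diam 3 V E) \<le> ceiling (3 * real (card E) / 4)"
proof -
  have sg: "simple_graph V E" using assms unfolding connected_graph_def by blast
  have fE: "finite E" using finE[OF sg] .
  obtain Os U where C: "finite Os" "\<forall>Q\<in>Os. Q \<subseteq> V \<and> card Q \<le> 3" "U \<subseteq> E" "card U \<le> 1"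
      "E - U \<subseteq> covr E Os" "2 * card Os + card U \<le> card E"
    using cover[OF assms] by blast
  note avg = averaging[OF sg C(1) C(2)]
  let ?B = "nat (ceiling (3 * real (card E) / 4))"
  have bound: "inv_dist 3 V D1 D2 \<le> ?B" if o: "orientation E D1" "orientation E D2" for D1 D2
  proof -
    let ?F = "{{u, v} | u v. (u, v) \<in> D1 \<and> (u, v) \<notin> D2}"
    have FE: "?F \<subseteq> E" and fl: "flipD D1 ?F = D2" using orient_diff[OF sg o] by auto
    obtain Xs where X: "okops V Xs" "eff E Xs = ?F"
        "2 * length Xs \<le> card Os + card (covr E Os) + 2 * card (?F - covr E Os)"
      using avg[rule_format, OF FE] by blast
    have "foldl invert D1 Xs = D2" using foldl_invert[OF orient_ok[OF o(1)]] X(2) fl by simp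
    then have tr: "transformable 3 V D1 D2 (length Xs)"
      unfolding transformable_def using X(1) unfolding okops_def by blast
    have covE: "covr E Os \<subseteq> E" unfolding covr_def by blast
    have c1: "card (covr E Os) + card (E - covr E Os) = card E"
      using covE fE by (metis card_Diff_subset card_mono add_diff_inverse_nat finite_subset not_less)
    have c2: "card (?F - covr E Os) \<le> card (E - covr E Os)"
      using FE fE by (intro card_mono) auto
    have c3: "card (E - covr E Os) \<le> card U"
      using C(5) C(3) fE by (intro card_mono) (auto intro: finite_subset)
    have "4 * length Xs \<le> 3 * card E + 1" using X(3) c1 c2 c3 C(4) C(6) by linarith
    then have "int (length Xs) \<le> ceiling (3 * real (card E) / 4)" by (rule ceil_bound)
    then have "length Xs \<le> ?B" by linarith
    moreover have "inv_dist 3 V D1 D2 \<le> length Xs"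
      unfolding inv_dist_def using tr by (rule Least_le)
    ultimately show ?thesis by linarith
  qed
  let ?S = "{inv_dist 3 V D1 D2 | D1 D2. orientation E D1 \<and> orientation E D2}"
  obtain h where h: "\<forall>e\<in>E. h e \<in> e" using good_orient[OF assms] by blast
  define D0 where "D0 = {(u, v). {u, v} \<in> E \<and> h {u, v} = v}"
  have "orientation E D0"
    unfolding orientation_def
  proof (intro conjI allI impI)
    show "\<forall>(u, v)\<in>D0. {u, v} \<in> E" unfolding D0_def by blast
    fix u v assume uv: "{u, v} \<in> E \<and> u \<noteq> v"
    have c: "{v, u} = {u, v}" by (rule insert_commute)
    have "h {u, v} \<in> {u, v}" using h uv by blast
    then show "((u, v) \<in> D0) = ((v, u) \<notin> D0)" unfolding D0_def using uv c by auto
  qed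
  then have ne: "inv_dist 3 V D0 D0 \<in> ?S" by blast
  have sub: "?S \<subseteq> {..?B}" using bound by blast
  have fS: "finite ?S" using sub finite_subset by blast
  have "Max ?S \<in> ?S" using fS ne by (intro Max_in) auto
  then have "Max ?S \<le> ?B" using sub by blast
  then have "inv_diam 3 V E \<le> ?B" unfolding inv_diam_def by simp
  then show ?thesis by linarith
qed

end
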